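(* Let $C:\{0,1\}^n\to\{0,1\}^m$ be any map, $q\ge1$, $\varepsilon\in(0,1/2]$. For every $Q\in\binom{[2m]}{q}$, the set $H_Q=\{i\in[n]:Q\in\mathrm{Good}_i\}$ satisfies $|H_Q|\le q/(1-\mathcal H(1/2+\varepsilon/4))$.
   Context: $\mathcal H(p)=-p\log_2p-(1-p)\log_2(1-p)$ is the binary entropy function. For $x\in\{0,1\}^n$, $C'(x)\in\{0,1\}^{2m}$ is $C(x)$ followed by $m$ independent uniformly random bits (independent of $x$). For $i\in[n]$, $\mathrm{Good}_i$ is the set of $Q\in\binom{[2m]}{q}$ for which there exists $f:\{0,1\}^q\to\{0,1\}$ with $\Pr[f(C'(x)_Q)=x_i]\ge1/2+\varepsilon/4$, the probability taken over uniform $x\in\{0,1\}^n$ and the padded random bits; $C'(x)_Q$ is the restriction of $C'(x)$ to $Q$ in increasing order. *)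

theory Defs
  imports Complex_Main
begin

definition bin_entropy :: "real \<Rightarrow> real" where
  "bin_entropy p = - p * log 2 p - (1 - p) * log 2 (1 - p)"

text \<open>The padded code word is
  C'(x) = C x @ r for a uniformly random r of length m; C'(x)_Q is nths (C x @ r) Q
  (positions 0-indexed, in increasing order).\<close>
definition good :: "nat \<Rightarrow> nat \<Rightarrow> (bool list \<Rightarrow> bool list) \<Rightarrow> real \<Rightarrow> nat \<Rightarrow> nat set \<Rightarrow> bool" where
  "good n m C \<epsilon> i Q \<longleftrightarrow>
     (\<exists>f :: bool list \<Rightarrow> bool.
        real (card {(x, r). length x = n \<and> length r = m \<and> f (nths (C x @ r) Q) = x ! i})
          / 2 ^ (n + m) \<ge> 1/2 + \<epsilon>/4)"

end

theory Submission imports Defs begin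
lemma lists_sum_prod:
  fixes w :: "nat \<Rightarrow> bool \<Rightarrow> real"
  shows "(\<Sum>x\<in>{x::bool list. length x = n}. \<Prod>i<n. w i (x!i)) = (\<Prod>i<n. w i True + w i False)"
proof (induction n arbitrary: w)
  case 0
  have "{x::bool list. length x = 0} = {[]}" by auto
  then show ?case by simp
next
  case (Suc n)
  have eq: "{x::bool list. length x = Suc n} = (\<lambda>(xs, a). a # xs) ` ({x. length x = n} \<times> UNIV)"
    using lists_length_Suc_eq[of UNIV n] by simp
  have inj: "inj_on (\<lambda>(xs, a::bool). a # xs) ({x. length x = n} \<times> UNIV)"
    by (auto simp: inj_on_def)
  have "(\<Sum>x\<in>{x::bool list. length x = Suc n}. \<Prod>i<Suc n. w i (x!i))
     = (\<Sum>(xs,a)\<in>{x::bool list. length x = n} \<times> UNIV. w 0 a * (\<Prod>i<n. w (Suc i) (xs!i)))"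
    unfolding eq by (subst sum.reindex[OF inj]) (simp del: prod.lessThan_Suc add: prod.lessThan_Suc_shift case_prod_unfold)
  also have "\<dots> = (\<Sum>xs\<in>{x::bool list. length x = n}. \<Sum>a\<in>UNIV. w 0 a * (\<Prod>i<n. w (Suc i) (xs!i)))"
    by (simp add: sum.cartesian_product)
  also have "\<dots> = (\<Sum>xs\<in>{x::bool list. length x = n}. (w 0 True + w 0 False) * (\<Prod>i<n. w (Suc i) (xs!i)))"
    by (simp add: UNIV_bool algebra_simps)
  also have "\<dots> = (w 0 True + w 0 False) * (\<Prod>i<n. w (Suc i) True + w (Suc i) False)"
    using Suc.IH[of "\<lambda>i. w (Suc i)"] by (simp add: sum_distrib_left[symmetric])
  finally show ?case by (simp del: prod.lessThan_Suc add: prod.lessThan_Suc_shift)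
qed

lemma card_lists_real: "real (card {x::bool list. length x = n}) = 2 ^ n"
  using lists_sum_prod[of "\<lambda>_ _. 1" n] by simp

lemma entropy_gap:
  fixes p :: real assumes "1/2 < p" "p < 1"
  shows "0 < ln 2 + p * ln p + (1 - p) * ln (1 - p)"
proof -
  have a: "ln (1/(2*p)) \<le> 1/(2*p) - 1" using assms by (intro ln_le_minus_one) auto
  have "ln (1/(2*p)) = - ln (2*p)" using assms by (simp add: ln_div)
  hence "ln (2*p) \<ge> 1 - 1/(2*p)" using a by linarith
  hence "p * ln (2*p) \<ge> p * (1 - 1/(2*p))" using assms by (intro mult_left_mono) auto
  moreover have "p * (1 - 1/(2*p)) = p - 1/2" using assms by (simp add: field_simps)
  ultimately have b: "p * ln (2*p) \<ge> p - 1/2" by linarith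
  have c: "ln (1 + (2*p-1)/(2*(1-p))) < (2*p-1)/(2*(1-p))"
    using assms by (intro ln_add_one_self_less_self) auto
  have "1 + (2*p-1)/(2*(1-p)) = 1/(2*(1-p))" using assms by (simp add: field_simps)
  moreover have "ln (1/(2*(1-p))) = - ln (2*(1-p))" using assms by (simp add: ln_div)
  ultimately have "- ln (2*(1-p)) < (2*p-1)/(2*(1-p))" using c by simp
  hence "(1-p) * (- ln (2*(1-p))) < (1-p) * ((2*p-1)/(2*(1-p)))"
    using assms by (intro mult_strict_left_mono) auto
  moreover have "(1-p) * ((2*p-1)/(2*(1-p))) = p - 1/2" using assms by (simp add: field_simps)
  ultimately have d: "(1-p) * ln (2*(1-p)) > 1/2 - p" by (simp add: algebra_simps)
  have "ln (2*p) = ln 2 + ln p" "ln (2*(1-p)) = ln 2 + ln (1-p)" using assms ln_mult[of 2 p] ln_mult[of 2 "1-p"] by auto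
  with b d show ?thesis by (simp add: algebra_simps)
qed

theorem mainTheorem10:
  fixes C :: "bool list \<Rightarrow> bool list" and n m q :: nat and \<epsilon> :: real and Q :: "nat set"
  assumes "\<And>x. length x = n \<Longrightarrow> length (C x) = m"
    and "q \<ge> 1"
    and "0 < \<epsilon>" and "\<epsilon> \<le> 1/2"
    and "Q \<subseteq> {0..<2*m}" and "card Q = q"
  shows "real (card {i \<in> {0..<n}. good n m C \<epsilon> i Q})
           \<le> real q / (1 - bin_entropy (1/2 + \<epsilon>/4))"
proof -
  define p where "p = 1/2 + \<epsilon>/4"
  have p1: "1/2 < p" and p2: "p < 1" using assms(3,4) by (auto simp: p_def)
  define b where "b = p / (1 - p)"
  have b1: "1 < b" using p1 p2 by (simp add: b_def field_simps)
  define G where "G = {i \<in> {0..<n}. good n m C \<epsilon> i Q}"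
  define k where "k = card G"
  have Gsub: "G \<subseteq> {..<n}" by (auto simp: G_def)
  have finG: "finite G" using Gsub finite_subset by blast
  define Xs where "Xs = {x::bool list. length x = n}"
  define Rs where "Rs = {r::bool list. length r = m}"
  define Om where "Om = Xs \<times> Rs"
  define Ys where "Ys = {y::bool list. length y = q}"
  define Y where "Y = (\<lambda>\<omega>::bool list \<times> bool list. nths (C (fst \<omega>) @ snd \<omega>) Q)"
  have finXs: "finite Xs" unfolding Xs_def using finite_lists_length_eq[of "UNIV::bool set" n] by simp
  have finRs: "finite Rs" unfolding Rs_def using finite_lists_length_eq[of "UNIV::bool set" m] by simp
  have finYs: "finite Ys" unfolding Ys_def using finite_lists_length_eq[of "UNIV::bool set" q] by simp
  have finOm: "finite Om" using finXs finRs by (simp add: Om_def)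
  have cXs: "real (card Xs) = 2^n" unfolding Xs_def by (rule card_lists_real)
  have cRs: "real (card Rs) = 2^m" unfolding Rs_def by (rule card_lists_real)
  have cYs: "real (card Ys) = 2^q" unfolding Ys_def by (rule card_lists_real)
  have cOm: "real (card Om) = 2^(n+m)" using cXs cRs by (simp add: Om_def card_cartesian_product power_add)
  have YYs: "Y \<omega> \<in> Ys" if "\<omega> \<in> Om" for \<omega>
  proof -
    have "length (C (fst \<omega>) @ snd \<omega>) = 2*m" using that assms(1) by (auto simp: Om_def Xs_def Rs_def)
    hence "{i. i < length (C (fst \<omega>) @ snd \<omega>) \<and> i \<in> Q} = Q" using assms(5) by auto
    thus ?thesis by (simp add: Y_def Ys_def length_nths assms(6))
  qed
  have "\<forall>i\<in>G. \<exists>f. real (card {(x, r). length x = n \<and> length r = m \<and> f (nths (C x @ r) Q) = x ! i})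
          / 2 ^ (n + m) \<ge> p"
    by (auto simp: G_def good_def p_def)
  then have "\<exists>F. \<forall>i\<in>G. real (card {(x, r). length x = n \<and> length r = m \<and> F i (nths (C x @ r) Q) = x ! i})
          / 2 ^ (n + m) \<ge> p" by (rule bchoice)
  then obtain F where F0: "\<forall>i\<in>G. real (card {(x, r). length x = n \<and> length r = m \<and> F i (nths (C x @ r) Q) = x ! i})
          / 2 ^ (n + m) \<ge> p"
    by blast
  note F = F0[rule_format]
  define E where "E = (\<lambda>i. {\<omega>\<in>Om. F i (Y \<omega>) = fst \<omega> ! i})"
  have EF: "real (card (E i)) \<ge> p * 2^(n+m)" if "i \<in> G" for i
  proof -
    have "{(x, r). length x = n \<and> length r = m \<and> F i (nths (C x @ r) Q) = x ! i} = E i"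
      by (auto simp: E_def Om_def Xs_def Rs_def Y_def)
    with F[OF that] show ?thesis by (simp add: field_simps)
  qed
  define A where "A = (\<lambda>\<omega>. (\<Sum>i\<in>G. if F i (Y \<omega>) = fst \<omega> ! i then 1 else 0 :: real))"
  define N where "N = real (card Om)"
  have Npos: "N > 0" using cOm by (simp add: N_def)
  have sumA: "(\<Sum>\<omega>\<in>Om. A \<omega>) = (\<Sum>i\<in>G. real (card (E i)))"
    unfolding A_def E_def
    by (subst sum.swap) (simp add: sum.inter_filter[symmetric] finOm)
  have sumA2: "(\<Sum>\<omega>\<in>Om. A \<omega>) \<ge> k * p * N"
  proof -
    have "(\<Sum>i\<in>G. real (card (E i))) \<ge> (\<Sum>i\<in>G. p * 2^(n+m))" by (rule sum_mono) (rule EF)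
    thus ?thesis using sumA cOm by (simp add: k_def N_def)
  qed
  define T where "T = (\<Prod>i<n. if i \<in> G then 1 + b else 2)"
  define W where "W = (\<lambda>y (\<omega>::bool list \<times> bool list). \<Prod>i\<in>G. if F i y = fst \<omega> ! i then b else 1)"
  have Wnn: "W y \<omega> \<ge> 0" for y \<omega> unfolding W_def using b1 by (intro prod_nonneg) auto
  have AW: "b powr A \<omega> = W (Y \<omega>) \<omega>" for \<omega>
    unfolding A_def W_def using b1 by (simp add: powr_sum) (rule prod.cong, auto)
  have Wsum: "(\<Sum>\<omega>\<in>Om. W y \<omega>) = 2^m * T" for y
  proof -
    have "(\<Sum>\<omega>\<in>Om. W y \<omega>) = (\<Sum>x\<in>Xs. \<Sum>r\<in>Rs. W y (x, r))"
      unfolding Om_def by (simp add: sum.cartesian_product)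
    also have "\<dots> = (\<Sum>x\<in>Xs. real (card Rs) * (\<Prod>i<n. if i \<in> G then (if F i y = x ! i then b else 1) else 1))"
    proof (rule sum.cong[OF refl])
      fix x
      have "(\<Prod>i\<in>G. if F i y = x ! i then b else 1) = (\<Prod>i<n. if i \<in> G then (if F i y = x ! i then b else 1) else 1)"
        using prod.inter_restrict[of "{..<n}" "\<lambda>i. if F i y = x ! i then b else 1" G] Gsub
        by (simp add: Int_absorb1)
      thus "(\<Sum>r\<in>Rs. W y (x, r)) = real (card Rs) * (\<Prod>i<n. if i \<in> G then (if F i y = x ! i then b else 1) else 1)"
        by (simp add: W_def)
    qed
    also have "\<dots> = 2^m * (\<Sum>x\<in>Xs. (\<Prod>i<n. if i \<in> G then (if F i y = x ! i then b else 1) else 1))"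
      by (simp add: cRs sum_distrib_left)
    also have "(\<Sum>x\<in>Xs. (\<Prod>i<n. if i \<in> G then (if F i y = x ! i then b else 1) else 1)) = T"
      unfolding Xs_def T_def
      by (subst lists_sum_prod[of "\<lambda>i a. if i \<in> G then (if F i y = a then b else 1) else 1"])
         (rule prod.cong, auto)
    finally show ?thesis .
  qed
  have key: "(\<Sum>\<omega>\<in>Om. b powr A \<omega>) \<le> 2^q * (2^m * T)"
  proof -
    have "(\<Sum>\<omega>\<in>Om. b powr A \<omega>) \<le> (\<Sum>\<omega>\<in>Om. \<Sum>y\<in>Ys. W y \<omega>)"
      unfolding AW by (rule sum_mono, rule member_le_sum) (auto simp: YYs Wnn finYs)
    also have "\<dots> = (\<Sum>y\<in>Ys. \<Sum>\<omega>\<in>Om. W y \<omega>)" by (rule sum.swap)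
    also have "\<dots> = 2^q * (2^m * T)" by (simp add: Wsum cYs)
    finally show ?thesis .
  qed
  define \<mu> where "\<mu> = (\<Sum>\<omega>\<in>Om. A \<omega>) / N"
  have jen: "b powr A \<omega> \<ge> b powr \<mu> * (1 + ln b * (A \<omega> - \<mu>))" for \<omega>
  proof -
    have "b powr A \<omega> = b powr \<mu> * b powr (A \<omega> - \<mu>)" by (simp add: powr_add[symmetric])
    also have "b powr (A \<omega> - \<mu>) = exp (ln b * (A \<omega> - \<mu>))" using b1 by (simp add: powr_def mult.commute)
    finally show ?thesis using exp_ge_add_one_self[of "ln b * (A \<omega> - \<mu>)"]
      by (simp add: mult_left_mono)
  qed
  have "(\<Sum>\<omega>\<in>Om. b powr \<mu> * (1 + ln b * (A \<omega> - \<mu>))) = N * b powr \<mu>"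
  proof -
    have "(\<Sum>\<omega>\<in>Om. b powr \<mu> * (1 + ln b * (A \<omega> - \<mu>)))
        = (\<Sum>\<omega>\<in>Om. b powr \<mu> + (b powr \<mu> * ln b) * A \<omega> - b powr \<mu> * ln b * \<mu>)"
      by (rule sum.cong) (auto simp: algebra_simps)
    also have "\<dots> = b powr \<mu> * N + (b powr \<mu> * ln b) * (\<Sum>\<omega>\<in>Om. A \<omega>) - N * (b powr \<mu> * ln b * \<mu>)"
      by (simp add: sum.distrib sum_subtractf sum_distrib_left N_def)
    also have "\<dots> = b powr \<mu> * N + b powr \<mu> * ln b * ((\<Sum>\<omega>\<in>Om. A \<omega>) - N * \<mu>)"
      by (simp add: algebra_simps)
    also have "(\<Sum>\<omega>\<in>Om. A \<omega>) - N * \<mu> = 0" using Npos by (simp add: \<mu>_def)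
    finally show ?thesis by simp
  qed
  hence "N * b powr \<mu> \<le> (\<Sum>\<omega>\<in>Om. b powr A \<omega>)" by (metis jen sum_mono)
  moreover have "b powr (k * p) \<le> b powr \<mu>"
    using b1 sumA2 Npos by (intro powr_mono) (auto simp: \<mu>_def field_simps)
  ultimately have ineq: "N * b powr (k * p) \<le> 2^q * (2^m * T)"
    using key Npos by (meson mult_left_mono less_imp_le order_trans)
  have Tval: "T = (1+b)^k * 2^(n-k)"
  proof -
    have "T = (\<Prod>i\<in>{..<n} \<inter> {i. i \<in> G}. 1 + b) * (\<Prod>i\<in>{..<n} \<inter> - {i. i \<in> G}. 2)"
      unfolding T_def by (rule prod.If_cases) simp
    also have "{..<n} \<inter> {i. i \<in> G} = G" using Gsub by auto
    also have "{..<n} \<inter> - {i. i \<in> G} = {..<n} - G" by auto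
    finally show ?thesis using Gsub finG by (simp add: k_def card_Diff_subset)
  qed
  have kn: "k \<le> n" using Gsub by (metis card_lessThan card_mono finite_lessThan k_def)
  have "(2::real)^(n+m) = 2^m * 2^(n-k) * 2^k" using kn
    by (simp add: power_add[symmetric] algebra_simps)
  with ineq cOm Tval have "2^k * b powr (k * p) \<le> 2^q * (1+b)^k"
    by (simp add: N_def mult.assoc mult_le_cancel_left_pos)
  hence "ln (2^k * b powr (k * p)) \<le> ln (2^q * (1+b)^k)"
    using b1 by (subst ln_le_cancel_iff) auto
  hence L: "k * ln 2 + k * p * ln b \<le> q * ln 2 + k * ln (1 + b)"
    using b1 by (simp add: ln_mult ln_realpow ln_powr)
  have lb: "ln b = ln p - ln (1-p)" using p1 p2 by (simp add: b_def ln_div)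
  have l1b: "ln (1+b) = - ln (1-p)" using p1 p2
    by (simp add: b_def field_simps ln_div)
  define D where "D = ln 2 + p * ln p + (1 - p) * ln (1 - p)"
  have Dpos: "D > 0" unfolding D_def by (rule entropy_gap[OF p1 p2])
  have kD: "k * D \<le> q * ln 2" using L unfolding lb l1b D_def by (simp add: algebra_simps)
  have H: "1 - bin_entropy p = D / ln 2"
    by (simp add: bin_entropy_def log_def D_def field_simps)
  have "real k \<le> q * ln 2 / D" using kD Dpos by (simp add: field_simps)
  also have "\<dots> = q / (D / ln 2)" by simp
  finally show ?thesis using H by (simp add: G_def k_def p_def)
qed

end
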